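(* Let $A$ be a Banach lattice algebra. If $a,b\in BP_l(A)\cap BP_r(A)$, then $ab=ba$.
   Context: A Banach lattice algebra is a real Banach lattice $A$ with an associative bilinear product making it a Banach algebra such that $xy\ge0$ whenever $x,y\ge0$. $L_a(x)=ax$, $R_a(x)=xa$. A band projection on a Banach lattice $X$ is an operator $P$ with $P^2=P$, $0\le P\le I_X$. $BP_l(A)=\{a\in A_+: L_a\text{ is a band projection}\}$, $BP_r(A)=\{a\in A_+: R_a\text{ is a band projection}\}$. *)

theory Defs
  imports "HOL-Analysis.Analysis"
begin

definition labs :: "'a::{lattice, ab_group_add} \<Rightarrow> 'a" where
  "labs x = sup x (- x)"

definition banach_lattice_algebra ::
  "'a::{banach, real_normed_algebra, ordered_real_vector, lattice} itself \<Rightarrow> bool" where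
  "banach_lattice_algebra _ \<longleftrightarrow>
     (\<forall>x y::'a. labs x \<le> labs y \<longrightarrow> norm x \<le> norm y) \<and>
     (\<forall>x y::'a. 0 \<le> x \<longrightarrow> 0 \<le> y \<longrightarrow> 0 \<le> x * y)"

text \<open>Band projection on a Banach lattice: a (linear) operator P with P^2 = P and 0 \<le> P \<le> I,
the operator order meaning 0 \<le> P x \<le> x for all x \<ge> 0.\<close>
definition band_projection :: "('a::ordered_real_vector \<Rightarrow> 'a) \<Rightarrow> bool" where
  "band_projection P \<longleftrightarrow> linear P \<and> P \<circ> P = P \<and>
     (\<forall>x. 0 \<le> x \<longrightarrow> 0 \<le> P x \<and> P x \<le> x)"

definition BP_l :: "'a::{real_algebra, ordered_real_vector} set" where
  "BP_l = {a. 0 \<le> a \<and> band_projection (\<lambda>x. a * x)}"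

definition BP_r :: "'a::{real_algebra, ordered_real_vector} set" where
  "BP_r = {a. 0 \<le> a \<and> band_projection (\<lambda>x. x * a)}"

end

theory Submission
  imports Defs
begin

lemma bp_pos_comm:
  fixes P Q :: "'a::{ordered_real_vector, lattice} \<Rightarrow> 'a"
  assumes P: "band_projection P" and Q: "band_projection Q" and x: "0 \<le> x"
  shows "P (Q x) = Q (P x)"
proof -
  have lP: "linear P" and PP: "\<And>y. P (P y) = P y" and pP: "\<And>y. 0 \<le> y \<Longrightarrow> 0 \<le> P y \<and> P y \<le> y"
    using P unfolding band_projection_def by (auto simp: fun_eq_iff)
  have lQ: "linear Q" and pQ: "\<And>y. 0 \<le> y \<Longrightarrow> 0 \<le> Q y \<and> Q y \<le> y"
    using Q unfolding band_projection_def by (auto simp: fun_eq_iff)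
  define y where "y = P x"
  define z where "z = x - P x"
  have y0: "0 \<le> y" using pP x y_def by simp
  have z0: "0 \<le> z" using pP x z_def by simp
  have Qy: "0 \<le> Q y" "Q y \<le> y" using pQ y0 by auto
  have Qz: "0 \<le> Q z" "Q z \<le> z" using pQ z0 by auto
  have Py: "P y = y" using PP y_def by simp
  have Pz: "P z = 0" using PP z_def linear_diff[OF lP] by simp
  have "0 \<le> (y - Q y) - P (y - Q y)" using pP[of "y - Q y"] Qy by simp
  hence a1: "Q y - P (Q y) \<le> 0" using Py linear_diff[OF lP] by (simp add: algebra_simps)
  have "0 \<le> Q y - P (Q y)" using pP[of "Q y"] Qy by simp
  hence PQy: "P (Q y) = Q y" using a1 by simp
  have "0 \<le> P (z - Q z)" using pP[of "z - Q z"] Qz by simp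
  hence "P (Q z) \<le> 0" using Pz linear_diff[OF lP] by simp
  hence PQz: "P (Q z) = 0" using pP[of "Q z"] Qz by simp
  have "x = y + z" using y_def z_def by simp
  hence "P (Q x) = P (Q y) + P (Q z)" using linear_add[OF lP] linear_add[OF lQ] by simp
  thus ?thesis using PQy PQz y_def by simp
qed

lemma bp_comm:
  fixes P Q :: "'a::{ordered_real_vector, lattice} \<Rightarrow> 'a"
  assumes P: "band_projection P" and Q: "band_projection Q"
  shows "P (Q x) = Q (P x)"
proof -
  have lP: "linear P" and lQ: "linear Q" using P Q unfolding band_projection_def by auto
  define p where "p = sup x 0"
  define n where "n = p - x"
  have p0: "0 \<le> p" and n0: "0 \<le> n" using p_def n_def by auto
  have "x = p - n" using n_def by simp
  hence "P (Q x) = P (Q p) - P (Q n)" "Q (P x) = Q (P p) - Q (P n)"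
    using linear_diff[OF lP] linear_diff[OF lQ] by simp_all
  thus ?thesis using bp_pos_comm[OF P Q p0] bp_pos_comm[OF P Q n0] by simp
qed

theorem mainTheorem17:
  fixes a b :: "'a::{banach, real_normed_algebra, ordered_real_vector, lattice}"
  assumes "banach_lattice_algebra TYPE('a)"
    and "a \<in> BP_l \<inter> BP_r" and "b \<in> BP_l \<inter> BP_r"
  shows "a * b = b * a"
proof -
  have La: "band_projection (\<lambda>x. a * x)" and Ra: "band_projection (\<lambda>x. x * a)"
   and Lb: "band_projection (\<lambda>x. b * x)" and Rb: "band_projection (\<lambda>x. x * b)"
    using assms unfolding BP_l_def BP_r_def by auto
  have aa: "a * (a * b) = a * b"
    using La unfolding band_projection_def by (auto simp: fun_eq_iff)
  have bb: "(b * a) * a = b * a"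
    using Ra unfolding band_projection_def by (auto simp: fun_eq_iff)
  have "a * (b * a) = b * (a * a)" using bp_comm[OF La Lb, of a] .
  hence 1: "a * b * a = b * a" using bb by (simp add: mult.assoc)
  have "a * a * b = a * b * a" using bp_comm[OF Ra Rb, of a] by simp
  hence 2: "a * a * b = a * b * a" .
  have "a * b = a * a * b" using aa by (simp add: mult.assoc)
  hence "a * b = a * b * a" using 2 by simp
  with 1 show ?thesis by simp
qed

end
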